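(* Let $s\ge 1$ and let $i,j$ be integers with $s\le j<i\le 2s$. Define $$U(s,i,j)=(-1)^{s+i+j}\,i\binom{2s}{i}\sum_{j'=0}^{s}\sum_{t=1}^{s-j'}\frac{(-1)^{j'+t+1}}{t}\binom{i-j'-1}{s+t-1}\binom{s}{t-1}\binom{s}{j-j'}\binom{s-j'}{t}^{-1}.$$ Then $U(s,i,j)=(-1)^{j+1}\binom{2s}{j}$.
   Context: Binomial coefficients $\binom{a}{b}$ are zero when $b<0$ or $b>a\ge 0$. An empty inner sum is $0$. *)

theory Defs
  imports Complex_Main
begin

text \<open>U(s,i,j), computed over the rationals. All binomial arguments are
nonnegative in the range s \<le> j < i \<le> 2s, 0 \<le> j' \<le> s, 1 \<le> t \<le> s - j'.
An empty inner sum (j' = s) is 0.\<close>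
definition U :: "nat \<Rightarrow> nat \<Rightarrow> nat \<Rightarrow> rat" where
  "U s i j = (-1) ^ (s + i + j) * of_nat i * of_nat (2 * s choose i) *
     (\<Sum>j'=0..s. \<Sum>t=1..s - j'.
        (-1) ^ (j' + t + 1) / of_nat t
        * of_nat ((i - j' - 1) choose (s + t - 1))
        * of_nat (s choose (t - 1))
        * of_nat (s choose (j - j'))
        / of_nat ((s - j') choose t))"

end

theory Submission
  imports Defs "HOL-Computational_Algebra.Formal_Power_Series"
begin

lemma NV:
  fixes R S n :: nat
  assumes "R < S"
  shows "(\<Sum>k\<le>n. (-1)^k * of_nat (R+k choose k) * of_nat (S choose (n-k))) = (of_nat ((S-R-1) choose n) :: rat)"
proof -
  have V: "(\<Sum>k\<in>{0..n}. ((-(of_nat (R+1))::rat) gchoose k) * (of_nat S gchoose (n-k))) = (-(of_nat (R+1)) + of_nat S) gchoose n"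
    by (rule gbinomial_Vandermonde)
  have a: "((-(of_nat (R+1))::rat) gchoose k) = (-1)^k * of_nat (R+k choose k)" for k
  proof -
    have "((-(of_nat (R+1))::rat) gchoose k) = (-1)^k * ((of_nat (R+1) + of_nat k - 1) gchoose k)"
      by (rule gbinomial_minus)
    also have "(of_nat (R+1) + of_nat k - 1 :: rat) = of_nat (R+k)" by simp
    finally show ?thesis by (simp add: binomial_gbinomial)
  qed
  have b: "(-(of_nat (R+1)) + of_nat S :: rat) = of_nat (S-R-1)" using assms by (simp add: of_nat_diff)
  show ?thesis using V unfolding a b by (simp add: binomial_gbinomial atLeast0AtMost mult.assoc)
qed

lemma tri1: "(of_nat (r+c+k choose (c+k)) * of_nat (c+k choose c) :: rat) = of_nat (r+c choose c) * of_nat (r+c+k choose k)"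
  by (simp add: binomial_fact field_simps)

lemma tri2:
  assumes "c \<le> n" "n \<le> V" "V \<le> N"
  shows "(of_nat (N choose (V-c)) * of_nat (V-c choose (n-c)) :: rat) = of_nat (N choose (V-n)) * of_nat ((N-V+n) choose (n-c))"
proof -
  have e1: "V - c - (n - c) = V - n" using assms by simp
  have e2: "N - V + n - (n - c) = N - (V - c)" using assms by simp
  show ?thesis using assms by (simp add: binomial_fact e1 e2 field_simps)
qed

lemma K:
  fixes r V t0 n :: nat
  assumes "n \<le> V"
  shows "(\<Sum>m\<le>n. (-1)^m * of_nat (r+m choose m) * of_nat ((r+V+1+t0+m) choose V) * of_nat ((r+V+1) choose (n-m)))
       = (of_nat ((r+V+1+t0) choose (V-n)) * of_nat ((t0+n) choose n) :: rat)"
proof -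
  define s where "s = r+V+1"
  define N where "N = r+V+1+t0"
  have vd: "(of_nat ((N+m) choose V) :: rat) = (\<Sum>c\<le>n. of_nat (m choose c) * of_nat (N choose (V-c)))" if "m \<le> n" for m
  proof -
    have "(N+m) choose V = (\<Sum>c\<le>V. (m choose c) * (N choose (V-c)))"
      using vandermonde[of m N V] by (simp add: add.commute)
    also have "\<dots> = (\<Sum>c\<le>n. (m choose c) * (N choose (V-c)))"
      by (rule sum.mono_neutral_right) (use assms that in auto)
    finally show ?thesis by (simp flip: of_nat_mult of_nat_sum)
  qed
  have inner: "(\<Sum>m\<le>n. (-1)^m * of_nat (r+m choose m) * of_nat (m choose c) * of_nat (s choose (n-m)))
      = (-1)^c * of_nat (r+c choose c) * (of_nat ((V-c) choose (n-c)) :: rat)" if "c \<le> n" for c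
  proof -
    have "(\<Sum>m\<le>n. (-1)^m * of_nat (r+m choose m) * of_nat (m choose c) * of_nat (s choose (n-m)))
        = (\<Sum>m\<in>{c..n}. (-1)^m * of_nat (r+m choose m) * of_nat (m choose c) * (of_nat (s choose (n-m)) :: rat))"
      by (rule sum.mono_neutral_right) auto
    also have "\<dots> = (\<Sum>k\<le>n-c. (-1)^(c+k) * of_nat (r+(c+k) choose (c+k)) * of_nat ((c+k) choose c) * (of_nat (s choose (n-(c+k))) :: rat))"
      by (rule sum.reindex_bij_witness[where j="\<lambda>m. m - c" and i="\<lambda>k. c+k"]) (use that in auto)
    also have "\<dots> = (\<Sum>k\<le>n-c. (-1)^c * of_nat (r+c choose c) * ((-1)^k * of_nat ((r+c)+k choose k) * (of_nat (s choose ((n-c)-k)) :: rat)))"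
    proof (rule sum.cong[OF refl])
      fix k assume "k \<in> {..n-c}"
      have "(of_nat (r+(c+k) choose (c+k)) * of_nat ((c+k) choose c) :: rat) = of_nat (r+c choose c) * of_nat (r+c+k choose k)"
        using tri1[of r c k] by (simp add: add.assoc)
      then show "(-1)^(c+k) * of_nat (r+(c+k) choose (c+k)) * of_nat ((c+k) choose c) * (of_nat (s choose (n-(c+k))) :: rat)
          = (-1)^c * of_nat (r+c choose c) * ((-1)^k * of_nat ((r+c)+k choose k) * (of_nat (s choose ((n-c)-k)) :: rat))"
        by (simp add: power_add algebra_simps diff_diff_eq)
    qed
    also have "\<dots> = (-1)^c * of_nat (r+c choose c) * (of_nat ((s-(r+c)-1) choose (n-c)) :: rat)"
    proof -
      have "(\<Sum>k\<le>n-c. (-1)^k * of_nat ((r+c)+k choose k) * (of_nat (s choose ((n-c)-k)) :: rat)) = of_nat ((s-(r+c)-1) choose (n-c))"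
        by (rule NV) (use that assms in \<open>simp add: s_def\<close>)
      then show ?thesis by (simp only: sum_distrib_left[symmetric])
    qed
    also have "s-(r+c)-1 = V - c" by (simp add: s_def)
    finally show ?thesis .
  qed
  have "(\<Sum>m\<le>n. (-1)^m * of_nat (r+m choose m) * of_nat ((r+V+1+t0+m) choose V) * of_nat ((r+V+1) choose (n-m)))
      = (\<Sum>m\<le>n. \<Sum>c\<le>n. (-1)^m * of_nat (r+m choose m) * of_nat (m choose c) * of_nat (s choose (n-m)) * (of_nat (N choose (V-c)) :: rat))"
  proof (rule sum.cong[OF refl])
    fix m assume m: "m \<in> {..n}"
    have e: "(of_nat ((r+V+1+t0+m) choose V) :: rat) = (\<Sum>c\<le>n. of_nat (m choose c) * of_nat (N choose (V-c)))"
      using vd[of m] m by (simp add: N_def add.commute add.left_commute)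
    have e2: "r+V+1 = s" by (simp add: s_def)
    show "(-1)^m * of_nat (r+m choose m) * of_nat ((r+V+1+t0+m) choose V) * of_nat ((r+V+1) choose (n-m))
      = (\<Sum>c\<le>n. (-1)^m * of_nat (r+m choose m) * of_nat (m choose c) * of_nat (s choose (n-m)) * (of_nat (N choose (V-c)) :: rat))"
      unfolding e by (simp add: s_def sum_distrib_left sum_distrib_right algebra_simps)
  qed
  also have "\<dots> = (\<Sum>c\<le>n. (\<Sum>m\<le>n. (-1)^m * of_nat (r+m choose m) * of_nat (m choose c) * of_nat (s choose (n-m))) * (of_nat (N choose (V-c)) :: rat))"
    by (subst sum.swap) (simp add: sum_distrib_right)
  also have "\<dots> = (\<Sum>c\<le>n. (-1)^c * of_nat (r+c choose c) * (of_nat ((V-c) choose (n-c)) * (of_nat (N choose (V-c)) :: rat)))"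
    by (rule sum.cong[OF refl]) (simp add: inner)
  also have "\<dots> = (\<Sum>c\<le>n. of_nat (N choose (V-n)) * ((-1)^c * of_nat (r+c choose c) * (of_nat ((N-V+n) choose (n-c)) :: rat)))"
  proof (rule sum.cong[OF refl])
    fix c assume "c \<in> {..n}"
    then have "(of_nat (N choose (V-c)) * of_nat (V-c choose (n-c)) :: rat) = of_nat (N choose (V-n)) * of_nat ((N-V+n) choose (n-c))"
      using assms by (intro tri2) (auto simp: N_def)
    then show "(-1)^c * of_nat (r+c choose c) * (of_nat ((V-c) choose (n-c)) * (of_nat (N choose (V-c)) :: rat))
       = of_nat (N choose (V-n)) * ((-1)^c * of_nat (r+c choose c) * (of_nat ((N-V+n) choose (n-c)) :: rat))"
      by (simp add: algebra_simps)
  qed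
  also have "\<dots> = of_nat (N choose (V-n)) * of_nat ((N-V+n-r-1) choose n)"
    by (simp add: sum_distrib_left[symmetric] NV N_def)
  also have "N-V+n-r-1 = t0+n" using assms by (simp add: N_def)
  finally show ?thesis by (simp add: N_def)
qed

definition TT :: "nat \<Rightarrow> nat \<Rightarrow> nat \<Rightarrow> nat \<Rightarrow> nat \<Rightarrow> rat" where
  "TT s i j j' t = (-1) ^ (j' + t + 1) / of_nat t
        * of_nat ((i - j' - 1) choose (s + t - 1))
        * of_nat (s choose (t - 1))
        * of_nat (s choose (j - j'))
        / of_nat ((s - j') choose t)"

lemma U_TT: "U s i j = (-1) ^ (s + i + j) * of_nat i * of_nat (2 * s choose i) *
     (\<Sum>j'=0..s. \<Sum>t=1..s - j'. TT s i j j' t)"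
  unfolding U_def TT_def by simp

lemma fac:
  fixes r V t0 m :: nat
  shows "(of_nat ((r+V+1+t0+m) choose (r+V+1+t0)) / (of_nat (Suc t0) * of_nat ((r+t0+m+1) choose (Suc t0))) :: rat)
     = fact t0 * fact r * fact V / fact (r+V+1+t0) * (of_nat (r+m choose m) * of_nat ((r+V+1+t0+m) choose V))"
proof -
  have a: "(of_nat ((r+V+1+t0+m) choose (r+V+1+t0)) :: rat) = fact (r+V+1+t0+m) / (fact (r+V+1+t0) * fact m)"
    by (subst binomial_fact) (simp_all add: algebra_simps)
  have b: "(of_nat ((r+t0+m+1) choose (Suc t0)) :: rat) = fact (r+t0+m+1) / (fact (Suc t0) * fact (r+m))"
    by (subst binomial_fact) simp_all
  have c: "(of_nat (r+m choose m) :: rat) = fact (r+m) / (fact m * fact r)"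
    by (subst binomial_fact) (simp_all add: algebra_simps)
  have d: "(of_nat ((r+V+1+t0+m) choose V) :: rat) = fact (r+V+1+t0+m) / (fact V * fact (r+t0+m+1))"
    by (subst binomial_fact) (simp_all add: algebra_simps)
  have fs: "(fact (Suc t0) :: rat) = of_nat (Suc t0) * fact t0" by (rule fact_Suc)
  show ?thesis unfolding a b c d fs by (simp add: field_simps del: fact_Suc of_nat_Suc)
qed

lemma term_eq:
  fixes r u w t0 m e :: nat
  assumes "t0 + m + e = w"
  shows "TT (r+u+w+1) (r+2*u+2*w+2) (r+2*u+w+1) (u+e) (Suc t0)
     = (-1)^(u+w) * of_nat ((r+u+w+1) choose t0) * (fact t0 * fact r * fact (u+w) / fact (r+(u+w)+1+t0))
       * ((-1)^m * of_nat (r+m choose m) * of_nat ((r+(u+w)+1+t0+m) choose (u+w)) * of_nat ((r+u+w+1) choose e))"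
proof -
  define s where "s = r+u+w+1"
  have h1: "(r+2*u+2*w+2) - (u+e) - 1 = r+(u+w)+1+t0+m" using assms by simp
  have h2: "s + Suc t0 - 1 = r+(u+w)+1+t0" by (simp add: s_def)
  have h3: "(r+2*u+w+1) - (u+e) = s - e" using assms by (simp add: s_def)
  have h4: "s choose (s - e) = s choose e" using assms binomial_symmetric[of e s] by (simp add: s_def)
  have h5: "s - (u+e) = r+t0+m+1" using assms by (simp add: s_def)
  have sg: "(-1::rat)^(u+e+Suc t0+1) = (-1)^(u+w) * (-1)^m"
  proof -
    have "u+w+m = (u+e+t0) + 2*m" using assms by simp
    have "(-1::rat)^(u+w) * (-1)^m = (-1)^(u+w+m)" by (simp only: power_add)
    also have "\<dots> = (-1)^(u+e+t0) * ((-1)^2)^m" unfolding \<open>u+w+m = (u+e+t0) + 2*m\<close> by (simp only: power_add power_mult)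
    finally have "(-1::rat)^(u+w) * (-1)^m = (-1)^(u+e+t0)" by simp
    then show ?thesis by simp
  qed
  have "TT s (r+2*u+2*w+2) (r+2*u+w+1) (u+e) (Suc t0)
      = (-1::rat)^(u+e+Suc t0+1) * of_nat (s choose t0) * of_nat (s choose e)
        * (of_nat ((r+(u+w)+1+t0+m) choose (r+(u+w)+1+t0)) / (of_nat (Suc t0) * of_nat ((r+t0+m+1) choose (Suc t0))))"
    unfolding TT_def h1 h2 h3 h4 h5 by (simp add: divide_inverse inverse_mult_distrib mult_ac)
  also have "\<dots> = (-1)^(u+w) * (-1)^m * of_nat (s choose t0) * of_nat (s choose e)
       * (fact t0 * fact r * fact (u+w) / fact (r+(u+w)+1+t0) * (of_nat (r+m choose m) * of_nat ((r+(u+w)+1+t0+m) choose (u+w))))"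
    unfolding sg fac[of r "u+w" t0 m] by simp
  finally show ?thesis unfolding s_def by (simp only: mult_ac)
qed

lemma TT_zero:
  fixes r u w t0 j' :: nat
  assumes "j' \<le> r+u+w+1" and "j' < u \<or> u + w < j' + t0"
  shows "TT (r+u+w+1) (r+2*u+2*w+2) (r+2*u+w+1) j' (Suc t0) = 0"
  using assms(2)
proof
  assume "j' < u"
  then have "r+u+w+1 < (r+2*u+w+1) - j'" by simp
  then show ?thesis unfolding TT_def by simp
next
  assume "u + w < j' + t0"
  then have "(r+2*u+2*w+2) - j' - 1 < r+u+w+1 + Suc t0 - 1" using assms(1) by simp
  then show ?thesis unfolding TT_def by (simp del: One_nat_def)
qed

lemma inner:
  fixes r u w t0 :: nat
  shows "(\<Sum>j'=0..r+u+w+1. TT (r+u+w+1) (r+2*u+2*w+2) (r+2*u+w+1) j' (Suc t0))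
    = (if t0 \<le> w then (-1)^(u+w) * of_nat ((r+u+w+1) choose t0) * (fact t0 * fact r * fact (u+w) / fact (r+(u+w)+1+t0))
         * (of_nat ((r+(u+w)+1+t0) choose (u+t0)) * of_nat (w choose (w-t0))) else 0)"
proof (cases "t0 \<le> w")
  case False
  have "(\<Sum>j'=0..r+u+w+1. TT (r+u+w+1) (r+2*u+2*w+2) (r+2*u+w+1) j' (Suc t0)) = 0"
  proof (rule sum.neutral, rule ballI)
    fix x assume "x \<in> {0..r+u+w+1}"
    then show "TT (r+u+w+1) (r+2*u+2*w+2) (r+2*u+w+1) x (Suc t0) = 0"
      by (intro TT_zero) (use False in auto)
  qed
  then show ?thesis using False by simp
next
  case True
  define n where "n = w - t0"
  define C0 where "C0 = (-1)^(u+w) * of_nat ((r+u+w+1) choose t0) * (fact t0 * fact r * fact (u+w) / (fact (r+(u+w)+1+t0) :: rat))"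
  have "(\<Sum>j'=0..r+u+w+1. TT (r+u+w+1) (r+2*u+2*w+2) (r+2*u+w+1) j' (Suc t0))
      = (\<Sum>j'=u..u+n. TT (r+u+w+1) (r+2*u+2*w+2) (r+2*u+w+1) j' (Suc t0))"
  proof (rule sum.mono_neutral_right)
    show "\<forall>x\<in>{0..r+u+w+1} - {u..u+n}. TT (r+u+w+1) (r+2*u+2*w+2) (r+2*u+w+1) x (Suc t0) = 0"
    proof
      fix x assume "x \<in> {0..r+u+w+1} - {u..u+n}"
      then show "TT (r+u+w+1) (r+2*u+2*w+2) (r+2*u+w+1) x (Suc t0) = 0"
        by (intro TT_zero) (use True in \<open>auto simp: n_def\<close>)
    qed
  qed (auto simp: n_def)
  also have "\<dots> = (\<Sum>m\<le>n. TT (r+u+w+1) (r+2*u+2*w+2) (r+2*u+w+1) (u+(n-m)) (Suc t0))"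
    by (rule sum.reindex_bij_witness[where j="\<lambda>j'. u+n-j'" and i="\<lambda>m. u+(n-m)"]) auto
  also have "\<dots> = (\<Sum>m\<le>n. C0 * ((-1)^m * of_nat (r+m choose m) * of_nat ((r+(u+w)+1+t0+m) choose (u+w)) * of_nat ((r+(u+w)+1) choose (n-m))))"
  proof (rule sum.cong[OF refl])
    fix m assume "m \<in> {..n}"
    then have "t0 + m + (n-m) = w" using True by (auto simp: n_def)
    from term_eq[OF this, of r u] show "TT (r+u+w+1) (r+2*u+2*w+2) (r+2*u+w+1) (u+(n-m)) (Suc t0) = C0 * ((-1)^m * of_nat (r+m choose m) * of_nat ((r+(u+w)+1+t0+m) choose (u+w)) * of_nat ((r+(u+w)+1) choose (n-m)))"
      by (simp add: C0_def add.assoc)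
  qed
  also have "\<dots> = C0 * (of_nat ((r+(u+w)+1+t0) choose ((u+w)-n)) * of_nat ((t0+n) choose n))"
  proof -
    have k: "(\<Sum>m\<le>n. (-1)^m * of_nat (r+m choose m) * of_nat ((r+(u+w)+1+t0+m) choose (u+w)) * of_nat ((r+(u+w)+1) choose (n-m)))
       = (of_nat ((r+(u+w)+1+t0) choose ((u+w)-n)) * of_nat ((t0+n) choose n) :: rat)"
      by (rule K) (simp add: n_def)
    show ?thesis unfolding sum_distrib_left[symmetric] k ..
  qed
  finally have X: "(\<Sum>j'=0..r+u+w+1. TT (r+u+w+1) (r+2*u+2*w+2) (r+2*u+w+1) j' (Suc t0))
     = C0 * (of_nat ((r+(u+w)+1+t0) choose ((u+w)-n)) * of_nat ((t0+n) choose n))" .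
  have e: "(u+w)-n = u+t0" "t0+n = w" using True by (auto simp: n_def)
  show ?thesis unfolding X e using True by (simp add: C0_def n_def)
qed

lemma G_eq:
  fixes r u w tt :: nat
  assumes "tt \<le> w"
  shows "(-1)^(u+w) * of_nat ((r+u+w+1) choose tt) * (fact tt * fact r * fact (u+w) / fact (r+(u+w)+1+tt))
         * (of_nat ((r+(u+w)+1+tt) choose (u+tt)) * of_nat (w choose (w-tt)))
       = (-1)^(u+w) * fact r * fact w / fact (r+w+1) * (of_nat ((r+u+w+1) choose tt) * (of_nat ((u+w) choose (w-tt)) :: rat))"
proof -
  obtain k where k: "w = tt + k" using assms le_Suc_ex by blast
  have a: "(of_nat ((r+(u+w)+1+tt) choose (u+tt)) :: rat) = fact (r+(u+w)+1+tt) / (fact (u+tt) * fact (r+w+1))"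
    by (subst binomial_fact) (simp_all add: k algebra_simps)
  have b: "(of_nat (w choose (w-tt)) :: rat) = fact w / (fact (w-tt) * fact tt)"
    by (subst binomial_fact) (simp_all add: k)
  have c: "(of_nat ((u+w) choose (w-tt)) :: rat) = fact (u+w) / (fact (w-tt) * fact (u+tt))"
    by (subst binomial_fact) (simp_all add: k algebra_simps)
  show ?thesis unfolding a b c by (simp add: field_simps del: fact_Suc of_nat_Suc)
qed

lemma main:
  fixes r u w :: nat
  shows "U (r+u+w+1) (r+2*u+2*w+2) (r+2*u+w+1) = (-1)^(r+2*u+w+1+1) * of_nat (2*(r+u+w+1) choose (r+2*u+w+1))"
proof -
  let ?T = "\<lambda>j' t. TT (r+u+w+1) (r+2*u+2*w+2) (r+2*u+w+1) j' t"
  let ?G = "\<lambda>t0. (-1)^(u+w) * fact r * fact w / fact (r+w+1) * (of_nat ((r+u+w+1) choose t0) * (of_nat ((u+w) choose (w-t0)) :: rat))"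
  have "(\<Sum>j'=0..r+u+w+1. \<Sum>t=1..r+u+w+1 - j'. ?T j' t) = (\<Sum>j'=0..r+u+w+1. \<Sum>t=1..r+u+w+1. ?T j' t)"
  proof (rule sum.cong[OF refl])
    fix j' assume "j' \<in> {0..r+u+w+1}"
    show "(\<Sum>t=1..r+u+w+1 - j'. ?T j' t) = (\<Sum>t=1..r+u+w+1. ?T j' t)"
    proof (rule sum.mono_neutral_left)
      show "\<forall>t\<in>{1..r+u+w+1} - {1..r+u+w+1 - j'}. ?T j' t = 0"
      proof
        fix t assume "t \<in> {1..r+u+w+1} - {1..r+u+w+1 - j'}"
        then have "r+u+w+1 - j' < t" by auto
        then show "?T j' t = 0" unfolding TT_def by simp
      qed
    qed auto
  qed
  also have "\<dots> = (\<Sum>t=1..r+u+w+1. \<Sum>j'=0..r+u+w+1. ?T j' t)"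
    by (rule sum.swap)
  also have "\<dots> = (\<Sum>t0=0..r+u+w. \<Sum>j'=0..r+u+w+1. ?T j' (Suc t0))"
    using sum.shift_bounds_cl_Suc_ivl[of "\<lambda>t. \<Sum>j'=0..r+u+w+1. ?T j' t" 0 "r+u+w"] by simp
  also have "\<dots> = (\<Sum>t0=0..r+u+w. if t0 \<le> w then ?G t0 else 0)"
  proof (rule sum.cong[OF refl])
    fix t0 assume "t0 \<in> {0..r+u+w}"
    show "(\<Sum>j'=0..r+u+w+1. ?T j' (Suc t0)) = (if t0 \<le> w then ?G t0 else 0)"
      unfolding inner using G_eq[where r=r and u=u and w=w and tt=t0] by simp
  qed
  also have "\<dots> = (\<Sum>t0=0..w. if t0 \<le> w then ?G t0 else 0)"
    by (rule sum.mono_neutral_right) auto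
  also have "\<dots> = (\<Sum>t0\<le>w. ?G t0)"
    by (rule sum.cong) auto
  also have "\<dots> = (-1)^(u+w) * fact r * fact w / fact (r+w+1) * of_nat ((r+u+w+1) + (u+w) choose w)"
    unfolding sum_distrib_left[symmetric] vandermonde[symmetric] by simp
  finally have DS: "(\<Sum>j'=0..r+u+w+1. \<Sum>t=1..r+u+w+1 - j'. ?T j' t) = (-1)^(u+w) * fact r * fact w / fact (r+w+1) * of_nat ((r+u+w+1) + (u+w) choose w)" .
  have sg: "(-1::rat)^((r+u+w+1) + (r+2*u+2*w+2) + (r+2*u+w+1)) * (-1)^(u+w) = (-1)^(r+2*u+w+1+1)"
  proof -
    have e: "(r+u+w+1) + (r+2*u+2*w+2) + (r+2*u+w+1) + (u+w) = (r+2*u+w+1+1) + 2*(r+2*u+2*w+1)" by simp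
    have "(-1::rat)^((r+u+w+1) + (r+2*u+2*w+2) + (r+2*u+w+1)) * (-1)^(u+w) = (-1)^((r+u+w+1) + (r+2*u+2*w+2) + (r+2*u+w+1) + (u+w))"
      by (simp only: power_add)
    also have "\<dots> = (-1)^(r+2*u+w+1+1) * ((-1)^2)^(r+2*u+2*w+1)" unfolding e by (simp only: power_add power_mult)
    finally show ?thesis by simp
  qed
  have f1: "(of_nat (2*(r+u+w+1) choose (r+2*u+2*w+2)) :: rat) = fact (2*(r+u+w+1)) / (fact (r+2*u+2*w+2) * fact r)"
    by (subst binomial_fact) (simp_all add: algebra_simps)
  have f2: "(fact (r+2*u+2*w+2) :: rat) = of_nat (r+2*u+2*w+2) * fact (r+2*u+2*w+1)"
    using fact_Suc[of "r+2*u+2*w+1"] by simp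
  have f3: "(of_nat ((r+u+w+1) + (u+w) choose w) :: rat) = fact (r+2*u+2*w+1) / (fact w * fact (r+2*u+w+1))"
  proof -
    have e: "(r+u+w+1)+(u+w) = r+2*u+2*w+1" by simp
    have e2: "r+2*u+2*w+1 - w = r+2*u+w+1" by simp
    have le: "w \<le> r+2*u+2*w+1" by simp
    show ?thesis unfolding e binomial_fact[OF le] e2 ..
  qed
  have f4: "(of_nat (2*(r+u+w+1) choose (r+2*u+w+1)) :: rat) = fact (2*(r+u+w+1)) / (fact (r+2*u+w+1) * fact (r+w+1))"
    by (subst binomial_fact) (simp_all add: algebra_simps)
  have "U (r+u+w+1) (r+2*u+2*w+2) (r+2*u+w+1) = (-1)^((r+u+w+1) + (r+2*u+2*w+2) + (r+2*u+w+1)) * of_nat (r+2*u+2*w+2)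
      * of_nat (2*(r+u+w+1) choose (r+2*u+2*w+2)) * ((-1)^(u+w) * fact r * fact w / fact (r+w+1) * of_nat ((r+u+w+1) + (u+w) choose w))"
    unfolding U_TT DS ..
  also have "\<dots> = ((-1)^((r+u+w+1) + (r+2*u+2*w+2) + (r+2*u+w+1)) * (-1)^(u+w)) * (of_nat (r+2*u+2*w+2)
      * of_nat (2*(r+u+w+1) choose (r+2*u+2*w+2)) * (fact r * fact w / fact (r+w+1) * of_nat ((r+u+w+1) + (u+w) choose w)))"
    by (simp only: mult_ac times_divide_eq_right times_divide_eq_left)
  also have "\<dots> = (-1)^(r+2*u+w+1+1) * (of_nat (r+2*u+2*w+2)
      * of_nat (2*(r+u+w+1) choose (r+2*u+2*w+2)) * (fact r * fact w / fact (r+w+1) * of_nat ((r+u+w+1) + (u+w) choose w)))"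
    unfolding sg ..
  also have "(of_nat (r+2*u+2*w+2)
      * of_nat (2*(r+u+w+1) choose (r+2*u+2*w+2)) * (fact r * fact w / fact (r+w+1) * of_nat ((r+u+w+1) + (u+w) choose w)) :: rat)
      = of_nat (2*(r+u+w+1) choose (r+2*u+w+1))"
    unfolding f1 f2 f3 f4 by (simp add: field_simps del: fact_Suc of_nat_Suc)
  finally show ?thesis .
qed

theorem corollary6:
  fixes s i j :: nat
  assumes "1 \<le> s" and "s \<le> j" and "j < i" and "i \<le> 2 * s"
  shows "U s i j = (-1) ^ (j + 1) * of_nat (2 * s choose j)"
proof -
  define u where "u = j - s"
  define w where "w = i - j - 1"
  define r where "r = 2 * s - i"
  have hs: "s = r+u+w+1" and hi: "i = r+2*u+2*w+2" and hj: "j = r+2*u+w+1"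
    using assms by (simp_all add: u_def w_def r_def)
  show ?thesis unfolding hi hj hs by (rule main)
qed

end
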